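(* Let $\mathscr{U}$ be a bounded monomial polyhedron, and let $B,C\in M_n(\mathbb{Q})$ be two matrices that both define $\mathscr{U}$ as a monomial polyhedron. Then $\max_{1\le k\le n}\mathsf{h}(B^{-1}e_k)=\max_{1\le k\le n}\mathsf{h}(C^{-1}e_k)$; i.e. the complexity $\kappa(\mathscr{U})$ depends only on $\mathscr{U}$.
   Context: A monomial polyhedron defined by $B\in M_n(\mathbb{Q})$ with rows $b^j$ is $\{z\in\mathbb{C}^n: \prod_{k}|z_k|^{b^j_k}<1 \text{ for all } j\}$, excluding points where some product is undefined due to division by zero. Bounded monomial polyhedra have invertible defining matrices. For $x\in\mathbb{Q}^n\setminus\{0\}$, $\mathsf{h}(x)=\sum_j|y_j|$ where $y\in\mathbb{Z}^n$ is a nonzero rational multiple of $x$ with $\gcd(y_1,\dots,y_n)=1$. $e_k$ is the $k$-th standard basis column vector. *)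

theory Defs
  imports "HOL-Analysis.Analysis"
begin

text \<open>Factor |z_k|^b of a monomial; a zero exponent gives the factor 1
  (so that 0^0 = 1, unlike Isabelle's powr).\<close>
definition mono_factor :: "complex \<Rightarrow> rat \<Rightarrow> real" where
  "mono_factor w b = (if b = 0 then 1 else norm w powr real_of_rat b)"

text \<open>The monomial polyhedron defined by B (rows B $ j): points z where every
  product prod_k |z_k|^(b^j_k) is defined (no zero coordinate raised to a
  negative exponent) and is < 1.\<close>
definition monomial_polyhedron :: "rat^'n^'n \<Rightarrow> (complex^'n) set" where
  "monomial_polyhedron B =
     {z. \<forall>j. (\<forall>k. B $ j $ k < 0 \<longrightarrow> z $ k \<noteq> 0) \<and>
             (\<Prod>k\<in>UNIV. mono_factor (z $ k) (B $ j $ k)) < 1}"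

definition defines_monomial_polyhedron :: "rat^'n^'n \<Rightarrow> (complex^'n) set \<Rightarrow> bool" where
  "defines_monomial_polyhedron B U \<longleftrightarrow> U = monomial_polyhedron B"

definition primitive_multiple :: "rat^'n \<Rightarrow> int^'n \<Rightarrow> bool" where
  "primitive_multiple x y \<longleftrightarrow>
     (\<exists>c::rat. c \<noteq> 0 \<and> (\<forall>j. of_int (y $ j) = c * x $ j)) \<and> Gcd (range (\<lambda>j. y $ j)) = 1"

definition height :: "rat^'n \<Rightarrow> int" where
  "height x = (\<Sum>j\<in>UNIV. \<bar>(SOME y. primitive_multiple x y) $ j\<bar>)"

definition complexity_wrt :: "rat^'n^'n \<Rightarrow> int" where
  "complexity_wrt B = Max (range (\<lambda>k. height (matrix_inv B *v axis k 1)))"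

end

theory Submission
  imports Defs
begin


definition cnd :: "rat^'n^'n \<Rightarrow> real^'n \<Rightarrow> bool" where
  "cnd B x \<longleftrightarrow> (\<forall>j. (\<Sum>k\<in>UNIV. real_of_rat (B$j$k) * x$k) < 0)"

definition zexp :: "real^'n \<Rightarrow> complex^'n" where
  "zexp x = (\<chi> k. complex_of_real (exp (x$k)))"

lemma mono_factor_exp: "mono_factor (complex_of_real (exp a)) b = exp (real_of_rat b * a)"
  by (simp add: mono_factor_def powr_def mult.commute)

lemma zexp_mem: "zexp x \<in> monomial_polyhedron B \<longleftrightarrow> cnd B x"
proof -
  have "(\<Prod>k\<in>UNIV. mono_factor (zexp x $ k) (B $ j $ k)) = exp (\<Sum>k\<in>UNIV. real_of_rat (B$j$k) * x$k)" for j
    by (simp add: zexp_def mono_factor_exp exp_sum)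
  then show ?thesis
    by (simp add: monomial_polyhedron_def cnd_def zexp_def)
qed

lemma norm_zexp: "exp (x$k) \<le> norm (zexp x)"
proof -
  have "norm (zexp x $ k) = exp (x$k)" by (simp add: zexp_def)
  then show ?thesis using Finite_Cartesian_Product.norm_nth_le[of "zexp x" k] by simp
qed

lemma height_scale:
  assumes "c \<noteq> 0" shows "height (c *s x) = height x"
proof -
  have "primitive_multiple (c *s x) = primitive_multiple x"
  proof (intro ext iffI)
    fix y assume "primitive_multiple (c *s x) y"
    then obtain d where "d \<noteq> 0" "\<forall>j. of_int (y $ j) = d * (c *s x) $ j" "Gcd (range (\<lambda>j. y $ j)) = 1"
      unfolding primitive_multiple_def by blast
    then show "primitive_multiple x y" unfolding primitive_multiple_def
      using assms by (intro conjI exI[of _ "d*c"]) (auto simp: mult.assoc)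
  next
    fix y assume "primitive_multiple x y"
    then obtain d where "d \<noteq> 0" "\<forall>j. of_int (y $ j) = d * x $ j" "Gcd (range (\<lambda>j. y $ j)) = 1"
      unfolding primitive_multiple_def by blast
    then show "primitive_multiple (c *s x) y" unfolding primitive_multiple_def
      using assms by (intro conjI exI[of _ "d/c"]) auto
  qed
  then show ?thesis unfolding height_def by simp
qed

lemma nonneg_inverse_monomial:
  fixes M N :: "rat^'n^'n"
  assumes M0: "\<And>i k. M$i$k \<ge> 0" and N0: "\<And>i k. N$i$k \<ge> 0"
    and MN: "M ** N = mat 1" and NM: "N ** M = mat 1"
  shows "\<exists>i. M$i$k \<noteq> 0 \<and> (\<forall>i'. i' \<noteq> i \<longrightarrow> M$i'$k = 0)"
proof -
  have s1: "(\<Sum>l\<in>UNIV. N$k$l * M$l$k) = 1"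
    using arg_cong[OF NM, of "\<lambda>A. A$k$k"] by (simp add: matrix_matrix_mult_def mat_def)
  obtain i where i: "M$i$k \<noteq> 0"
    using s1 by (metis (no_types, lifting) mult_zero_right sum.neutral zero_neq_one)
  obtain l where l: "N$k$l \<noteq> 0"
    using s1 by (metis (no_types, lifting) mult_zero_left sum.neutral zero_neq_one)
  have key: "i' = l" if "M$i'$k \<noteq> 0" for i'
  proof (rule ccontr)
    assume ne: "i' \<noteq> l"
    have "(M ** N)$i'$l = 0" using MN ne by (simp add: mat_def)
    hence z: "(\<Sum>m\<in>UNIV. M$i'$m * N$m$l) = 0" by (simp add: matrix_matrix_mult_def)
    have "M$i'$k * N$k$l \<le> (\<Sum>m\<in>UNIV. M$i'$m * N$m$l)"
      by (rule member_le_sum) (auto simp: M0 N0)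
    moreover have "M$i'$k * N$k$l > 0"
      using that l M0[of i' k] N0[of k l] by (simp add: order_le_neq_trans)
    ultimately show False using z by simp
  qed
  show ?thesis using i key by (metis)
qed



definition rvec :: "rat^'n \<Rightarrow> real^'n" where "rvec y = (\<chi> k. real_of_rat (y$k))"

lemma sum_rvec: "(\<Sum>k\<in>UNIV. real_of_rat (B$j$k) * rvec y $ k) = real_of_rat ((B *v y)$j)"
  by (simp add: rvec_def matrix_vector_mult_def of_rat_sum of_rat_mult)

lemma exists_x0:
  assumes z: "z \<in> monomial_polyhedron B"
  shows "\<exists>x. cnd B x"
proof -
  define A where "A j = (\<Sum>k\<in>UNIV. if z$k = 0 then 0 else real_of_rat (B$j$k) * ln (norm (z$k)))" for j
  define s where "s j = (\<Sum>k\<in>UNIV. if z$k = 0 then real_of_rat (B$j$k) else 0)" for j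
  define xT where "xT T = (\<chi> k. if z$k = 0 then - T else ln (norm (z$k)))" for T
  have nz: "B$j$k < 0 \<Longrightarrow> z$k \<noteq> 0" for j k using z by (auto simp: monomial_polyhedron_def)
  have prod: "(\<Prod>k\<in>UNIV. mono_factor (z $ k) (B $ j $ k)) < 1" for j
    using z by (auto simp: monomial_polyhedron_def)
  have sumeq: "(\<Sum>k\<in>UNIV. real_of_rat (B$j$k) * xT T $ k) = A j - T * s j" for j T
  proof -
    have "(\<Sum>k\<in>UNIV. real_of_rat (B$j$k) * xT T $ k)
        = (\<Sum>k\<in>UNIV. (if z$k = 0 then 0 else real_of_rat (B$j$k) * ln (norm (z$k))) - T * (if z$k = 0 then real_of_rat (B$j$k) else 0))"
      by (rule sum.cong) (auto simp: xT_def)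
    also have "\<dots> = A j - T * s j"
      by (simp add: A_def s_def sum_subtractf sum_distrib_left)
    finally show ?thesis .
  qed
  have s0: "s j \<ge> 0" for j
    unfolding s_def by (rule sum_nonneg) (metis nz not_less of_rat_less_0_iff order_refl)
  have ev: "eventually (\<lambda>T. A j - T * s j < 0) at_top" for j
  proof (cases "s j = 0")
    case True
    have allz: "z$k = 0 \<Longrightarrow> B$j$k = 0" for k
    proof -
      assume zk: "z$k = 0"
      have "\<forall>k\<in>UNIV. (if z$k = 0 then real_of_rat (B$j$k) else 0) = 0"
        using True unfolding s_def
        by (subst sum_nonneg_eq_0_iff[symmetric]) (auto, metis nz not_less of_rat_less_0_iff order_refl)
      then show ?thesis using zk by (metis UNIV_I of_rat_eq_0_iff)
    qed
    have "(\<Prod>k\<in>UNIV. mono_factor (z $ k) (B $ j $ k))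
        = (\<Prod>k\<in>UNIV. exp (if z$k = 0 then 0 else real_of_rat (B$j$k) * ln (norm (z$k))))"
      by (rule prod.cong) (auto simp: allz mono_factor_def powr_def mult.commute)
    also have "\<dots> = exp (A j)" by (simp add: A_def exp_sum)
    finally have "A j < 0" using prod[of j] by simp
    then show ?thesis using True by simp
  next
    case False
    then have sp: "s j > 0" using s0[of j] by simp
    have "eventually (\<lambda>T. T > A j / s j) at_top" by (rule eventually_gt_at_top)
    then show ?thesis
      by eventually_elim (use sp in \<open>auto simp: field_simps\<close>)
  qed
  have "eventually (\<lambda>T. \<forall>j. A j - T * s j < 0) at_top"
    by (rule eventually_all_finite) (rule ev)
  then obtain N where "\<And>T. T \<ge> N \<Longrightarrow> \<forall>j. A j - T * s j < 0"
    unfolding eventually_at_top_linorder by blast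
  then have "\<forall>j. A j - N * s j < 0" by blast
  then have "cnd B (xT N)" by (simp add: cnd_def sumeq)
  then show ?thesis by blast
qed


lemma invertible_of_bounded:
  fixes B :: "rat^'n^'n"
  assumes b: "bounded (monomial_polyhedron B)" and x0: "cnd B x0"
  shows "invertible B"
proof -
  have ker: "v = 0" if v: "B *v v = 0" for v
  proof (rule ccontr)
    assume "v \<noteq> 0"
    then obtain k where vk: "v$k \<noteq> 0" by (metis vec_eq_iff zero_index)
    obtain a where a: "\<And>z. z \<in> monomial_polyhedron B \<Longrightarrow> norm z \<le> a"
      using b unfolding bounded_iff by blast
    define r where "r = real_of_rat (v$k)"
    have r0: "r \<noteq> 0" using vk by (simp add: r_def)
    define t where "t = (ln (\<bar>a\<bar> + 1) - x0$k) / r"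
    define x where "x = x0 + t *\<^sub>R rvec v"
    have xi: "x$i = x0$i + t * rvec v $ i" for i by (simp add: x_def)
    have h1: "(\<Sum>k\<in>UNIV. real_of_rat (B$j$k) * x$k) = (\<Sum>k\<in>UNIV. real_of_rat (B$j$k) * x0$k)
          + t * (\<Sum>k\<in>UNIV. real_of_rat (B$j$k) * rvec v$k)" for j
      unfolding xi distrib_left sum.distrib sum_distrib_left by (simp add: mult.left_commute)
    have h2: "(\<Sum>k\<in>UNIV. real_of_rat (B$j$k) * rvec v$k) = 0" for j
      using v by (simp only: sum_rvec) simp
    have "cnd B x" using x0 h1 h2 by (simp add: cnd_def)
    then have "norm (zexp x) \<le> a" using a zexp_mem by blast
    moreover have "x$k = ln (\<bar>a\<bar> + 1)"
      using r0 by (simp add: xi t_def rvec_def r_def[symmetric])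
    then have "exp (x$k) = \<bar>a\<bar> + 1" by simp
    ultimately show False using norm_zexp[of x k] by linarith
  qed
  have "\<exists>B'. B' ** B = mat 1"
    by (subst matrix_left_invertible_ker) (use ker in blast)
  then obtain B' where B': "B' ** B = mat 1" by blast
  then have "B ** B' = mat 1" using matrix_left_right_inverse[of B B'] by simp
  then show ?thesis
    unfolding invertible_def using B' by blast
qed

lemma nonneg_transfer:
  fixes B C :: "rat^'n^'n"
  assumes x0: "cnd B x0" and eq: "\<And>x. cnd B x \<longleftrightarrow> cnd C x"
    and cy: "\<And>j. (C *v y)$j \<ge> 0"
  shows "(B *v y)$j \<ge> 0"
proof (rule ccontr)
  assume neg: "\<not> (B *v y)$j \<ge> 0"
  define bx where "bx = (\<Sum>k\<in>UNIV. real_of_rat (B$j$k) * x0$k)"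
  define by' where "by' = real_of_rat ((B *v y)$j)"
  have bxn: "bx < 0" using x0 by (simp add: cnd_def bx_def)
  have byn: "by' < 0" using neg by (simp add: by'_def)
  define t where "t = by' / (2 * bx)"
  have tp: "t > 0" using bxn byn by (simp add: t_def divide_neg_neg)
  have lin: "(\<Sum>k\<in>UNIV. real_of_rat (M$i$k) * (t *\<^sub>R x0 - rvec y)$k)
      = t * (\<Sum>k\<in>UNIV. real_of_rat (M$i$k) * x0$k) - real_of_rat ((M *v y)$i)" for M :: "rat^'n^'n" and i
    by (simp add: algebra_simps sum_subtractf sum_distrib_left flip: sum_rvec)
  have "cnd C (t *\<^sub>R x0 - rvec y)"
  proof -
    have "cnd C x0" using x0 eq by blast
    then show ?thesis unfolding cnd_def lin
      using tp cy by (smt (verit, best) mult_pos_neg zero_le_of_rat_iff)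
  qed
  then have "cnd B (t *\<^sub>R x0 - rvec y)" using eq by blast
  then have "t * bx - by' < 0" unfolding cnd_def lin bx_def by'_def by blast
  moreover have "t * bx = by' / 2" using bxn by (simp add: t_def)
  ultimately show False using byn by simp
qed



lemma matrix_inv_props:
  fixes A :: "rat^'n^'n"
  assumes "invertible A"
  shows "A ** matrix_inv A = mat 1" "matrix_inv A ** A = mat 1"
proof -
  have "\<exists>A'. A ** A' = mat 1 \<and> A' ** A = mat 1" using assms unfolding invertible_def .
  then have "A ** matrix_inv A = mat 1 \<and> matrix_inv A ** A = mat 1"
    unfolding matrix_inv_def by (rule someI_ex)
  then show "A ** matrix_inv A = mat 1" "matrix_inv A ** A = mat 1" by auto
qed

lemma mv_axis: "((A::rat^'n^'n) *v axis k 1)$i = A$i$k"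
  by (simp add: matrix_vector_mult_def axis_def if_distrib cong: if_cong)

lemma mv_smult: "(A::rat^'n^'n) *v (c *s v) = c *s (A *v v)"
  by (simp add: vec_eq_iff matrix_vector_mult_def sum_distrib_left mult.left_commute)

lemma key:
  fixes B C :: "rat^'n^'n"
  assumes iB: "invertible B" and iC: "invertible C" and x0: "cnd B x0"
    and eq: "\<And>x. cnd B x \<longleftrightarrow> cnd C x"
  shows "\<exists>i c. c \<noteq> 0 \<and> matrix_inv C *v axis k 1 = c *s (matrix_inv B *v axis i 1)"
proof -
  note B1 = matrix_inv_props[OF iB] and C1 = matrix_inv_props[OF iC]
  define M where "M = B ** matrix_inv C"
  define N where "N = C ** matrix_inv B"
  have MN: "M ** N = mat 1"
  proof -
    have "M ** N = B ** ((matrix_inv C ** C) ** matrix_inv B)"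
      by (simp add: M_def N_def matrix_mul_assoc)
    then show ?thesis using B1 C1 by simp
  qed
  have NM: "N ** M = mat 1"
  proof -
    have "N ** M = C ** ((matrix_inv B ** B) ** matrix_inv C)"
      by (simp add: M_def N_def matrix_mul_assoc)
    then show ?thesis using B1 C1 by simp
  qed
  have x0C: "cnd C x0" using x0 eq by blast
  have eq': "\<And>x. cnd C x \<longleftrightarrow> cnd B x" using eq by blast
  have M0: "M$i$l \<ge> 0" for i l
  proof -
    define y where "y = matrix_inv C *v axis l 1"
    have "C *v y = axis l 1" using C1 by (simp add: y_def matrix_vector_mul_assoc)
    then have "\<And>j. (C *v y)$j \<ge> 0" by (simp add: axis_def)
    then have "(B *v y)$i \<ge> 0" by (rule nonneg_transfer[OF x0 eq])
    moreover have "B *v y = M *v axis l 1" by (simp add: y_def M_def matrix_vector_mul_assoc)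
    ultimately show ?thesis by (simp add: mv_axis)
  qed
  have N0: "N$i$l \<ge> 0" for i l
  proof -
    define y where "y = matrix_inv B *v axis l 1"
    have "B *v y = axis l 1" using B1 by (simp add: y_def matrix_vector_mul_assoc)
    then have "\<And>j. (B *v y)$j \<ge> 0" by (simp add: axis_def)
    then have "(C *v y)$i \<ge> 0" by (rule nonneg_transfer[OF x0C eq'])
    moreover have "C *v y = N *v axis l 1" by (simp add: y_def N_def matrix_vector_mul_assoc)
    ultimately show ?thesis by (simp add: mv_axis)
  qed
  obtain i where i: "M$i$k \<noteq> 0" and oth: "\<And>i'. i' \<noteq> i \<Longrightarrow> M$i'$k = 0"
    using nonneg_inverse_monomial[OF M0 N0 MN NM, of k] by blast
  have Mk: "M *v axis k 1 = M$i$k *s axis i 1"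
    unfolding vec_eq_iff mv_axis using oth by (auto simp: axis_def)
  have "matrix_inv C *v axis k 1 = matrix_inv B *v (M *v axis k 1)"
    using B1 by (simp add: M_def matrix_vector_mul_assoc matrix_mul_assoc)
  also have "\<dots> = M$i$k *s (matrix_inv B *v axis i 1)" by (simp add: Mk mv_smult)
  finally show ?thesis using i by blast
qed

theorem proposition3p3:
  fixes B C :: "rat^'n^'n" and U :: "(complex^'n) set"
  assumes "bounded U" and "U \<noteq> {}"
    and "defines_monomial_polyhedron B U"
    and "defines_monomial_polyhedron C U"
  shows "Max (range (\<lambda>k. height (matrix_inv B *v axis k 1)))
       = Max (range (\<lambda>k. height (matrix_inv C *v axis k 1)))"
proof -
  have UB: "U = monomial_polyhedron B" and UC: "U = monomial_polyhedron C"
    using assms(3,4) unfolding defines_monomial_polyhedron_def by auto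
  obtain z where "z \<in> monomial_polyhedron B" using assms(2) UB by blast
  then obtain x0 where x0: "cnd B x0" using exists_x0 by blast
  have eq: "cnd B x \<longleftrightarrow> cnd C x" for x
    using UB UC zexp_mem by metis
  have x0C: "cnd C x0" using x0 eq by blast
  have iB: "invertible B" using invertible_of_bounded assms(1) UB x0 by blast
  have iC: "invertible C" using invertible_of_bounded assms(1) UC x0C by blast
  have "range (\<lambda>k. height (matrix_inv C *v axis k 1)) \<subseteq> range (\<lambda>k. height (matrix_inv B *v axis k 1))"
  proof
    fix h assume "h \<in> range (\<lambda>k. height (matrix_inv C *v axis k 1))"
    then obtain k where h: "h = height (matrix_inv C *v axis k 1)" by blast
    obtain i c where "c \<noteq> 0" "matrix_inv C *v axis k 1 = c *s (matrix_inv B *v axis i 1)"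
      using key[OF iB iC x0 eq] by blast
    then show "h \<in> range (\<lambda>k. height (matrix_inv B *v axis k 1))"
      using h height_scale by auto
  qed
  moreover have "range (\<lambda>k. height (matrix_inv B *v axis k 1)) \<subseteq> range (\<lambda>k. height (matrix_inv C *v axis k 1))"
  proof
    fix h assume "h \<in> range (\<lambda>k. height (matrix_inv B *v axis k 1))"
    then obtain k where h: "h = height (matrix_inv B *v axis k 1)" by blast
    obtain i c where "c \<noteq> 0" "matrix_inv B *v axis k 1 = c *s (matrix_inv C *v axis i 1)"
      using key[OF iC iB x0C] eq by blast
    then show "h \<in> range (\<lambda>k. height (matrix_inv C *v axis k 1))"
      using h height_scale by auto
  qed
  ultimately show ?thesis by (simp add: subset_antisym)
qed


end
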